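(* Let $P(X)=\sum_{i=0}^d a_iX^i$ be a polynomial with coefficients $a_i$ in $\mathbb{D}$, and let $A,B\in\mathbb{D}$ with $P(A)=P(B)$. Then $A=B$ provided either $a_1\in\mathbb{D}^*$, or there exists $i>1$ with $a_i\in\mathbb{D}^*$ and $A\in\mathbb{D}^*$.
   Context: $\mathbb{D}$ is the set of finite dynamical systems (FDSs), i.e. functions $A:S_A\to S_A$ on finite sets, considered up to isomorphism of functional graphs. The sum $A+B$ acts on the disjoint union $S_A\sqcup S_B$ as $A$ on $S_A$ and $B$ on $S_B$; the product $AB$ acts on $S_A\times S_B$ by $(a,b)\mapsto(A(a),B(b))$. $X^i$ denotes the $i$-fold product, $X^0$ is the one-state FDS with a fixpoint, and $P(A)=\sum_i a_iA^i$ is evaluated with these operations. $\mathbb{D}^*$ is the set of FDSs having a fixpoint (a state $s$ with $A(s)=s$). *)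

theory Defs
  imports Main "HOL-Library.Nat_Bijection"
begin

text \<open>A finite dynamical system (FDS) is represented by a finite carrier set of
states (encoded as natural numbers; every finite set is in bijection with a finite
set of naturals) together with a map that sends the carrier into itself.
Values of the map outside the carrier are irrelevant.\<close>

type_synonym fds = "nat set \<times> (nat \<Rightarrow> nat)"

definition is_fds :: "fds \<Rightarrow> bool" where
  "is_fds A \<longleftrightarrow> finite (fst A) \<and> (\<forall>x\<in>fst A. snd A x \<in> fst A)"

definition fds_iso :: "fds \<Rightarrow> fds \<Rightarrow> bool" where
  "fds_iso A B \<longleftrightarrow> (\<exists>h. bij_betw h (fst A) (fst B) \<and>
                       (\<forall>x\<in>fst A. h (snd A x) = snd B (h x)))"

text \<open>Sum: disjoint union (left copy on even codes, right copy on odd codes).\<close>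
definition fds_sum :: "fds \<Rightarrow> fds \<Rightarrow> fds" where
  "fds_sum A B = ((\<lambda>x. 2 * x) ` fst A \<union> (\<lambda>x. 2 * x + 1) ` fst B,
     (\<lambda>n. if even n then 2 * snd A (n div 2) else 2 * snd B (n div 2) + 1))"

definition fds_prod :: "fds \<Rightarrow> fds \<Rightarrow> fds" where
  "fds_prod A B = (prod_encode ` (fst A \<times> fst B),
     (\<lambda>n. case prod_decode n of (a, b) \<Rightarrow> prod_encode (snd A a, snd B b)))"

definition fds_one :: fds where "fds_one = ({0}, \<lambda>_. 0)"
definition fds_zero :: fds where "fds_zero = ({}, \<lambda>x. x)"

primrec fds_pow :: "fds \<Rightarrow> nat \<Rightarrow> fds" where
  "fds_pow A 0 = fds_one"
| "fds_pow A (Suc n) = fds_prod A (fds_pow A n)"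

text \<open>Polynomial with coefficient list [a_0, a_1, ..., a_d]:
  peval_from i as X = sum over k of (as ! k) * X^(i+k).\<close>
primrec peval_from :: "nat \<Rightarrow> fds list \<Rightarrow> fds \<Rightarrow> fds" where
  "peval_from i [] X = fds_zero"
| "peval_from i (a # as) X = fds_sum (fds_prod a (fds_pow X i)) (peval_from (Suc i) as X)"

definition peval :: "fds list \<Rightarrow> fds \<Rightarrow> fds" where
  "peval as X = peval_from 0 as X"

text \<open>Membership in D*: having a fixpoint.\<close>
definition has_fixpoint :: "fds \<Rightarrow> bool" where
  "has_fixpoint A \<longleftrightarrow> (\<exists>s\<in>fst A. snd A s = s)"

end

theory Submission
  imports Defs "HOL-Library.FuncSet"
begin



definition homs :: "fds \<Rightarrow> fds \<Rightarrow> (nat \<Rightarrow> nat) set" where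
  "homs C X = {h \<in> fst C \<rightarrow>\<^sub>E fst X. \<forall>x\<in>fst C. h (snd C x) = snd X (h x)}"

lemma finite_homs: "finite (fst X) \<Longrightarrow> finite (fst C) \<Longrightarrow> finite (homs C X)"
  unfolding homs_def by (rule finite_subset[of _ "fst C \<rightarrow>\<^sub>E fst X"]) (auto intro: finite_PiE)

lemma is_fds_sum: "is_fds X \<Longrightarrow> is_fds Y \<Longrightarrow> is_fds (fds_sum X Y)"
  unfolding is_fds_def fds_sum_def by auto

lemma is_fds_prod: "is_fds X \<Longrightarrow> is_fds Y \<Longrightarrow> is_fds (fds_prod X Y)"
  unfolding is_fds_def fds_prod_def by auto

lemma is_fds_one: "is_fds fds_one" unfolding is_fds_def fds_one_def by auto
lemma is_fds_zero: "is_fds fds_zero" unfolding is_fds_def fds_zero_def by auto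

lemma is_fds_pow: "is_fds X \<Longrightarrow> is_fds (fds_pow X n)"
  by (induction n) (auto intro: is_fds_prod is_fds_one)

lemma is_fds_peval_from: "\<forall>a\<in>set as. is_fds a \<Longrightarrow> is_fds X \<Longrightarrow> is_fds (peval_from i as X)"
  by (induction as arbitrary: i) (auto intro: is_fds_sum is_fds_prod is_fds_pow is_fds_zero)

lemma fds_iso_sym:
  assumes "is_fds Y" "fds_iso Y Z" shows "fds_iso Z Y"
proof -
  obtain h where h: "bij_betw h (fst Y) (fst Z)" "\<forall>x\<in>fst Y. h (snd Y x) = snd Z (h x)"
    using assms(2) unfolding fds_iso_def by blast
  let ?g = "inv_into (fst Y) h"
  have "bij_betw ?g (fst Z) (fst Y)" using h(1) by (rule bij_betw_inv_into)
  moreover have "\<forall>z\<in>fst Z. ?g (snd Z z) = snd Y (?g z)"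
  proof
    fix z assume z: "z \<in> fst Z"
    then obtain y where y: "y \<in> fst Y" "z = h y" using h(1) by (auto simp: bij_betw_def)
    have "snd Y y \<in> fst Y" using assms(1) y(1) unfolding is_fds_def by auto
    then show "?g (snd Z z) = snd Y (?g z)"
      using y h by (metis bij_betw_inv_into_left)
  qed
  ultimately show ?thesis unfolding fds_iso_def by blast
qed

lemma homs_iso_le:
  assumes "fds_iso Y Z" "finite (fst Z)" "is_fds C"
  shows "card (homs C Y) \<le> card (homs C Z)"
proof -
  obtain h where h: "bij_betw h (fst Y) (fst Z)" "\<forall>x\<in>fst Y. h (snd Y x) = snd Z (h x)"
    using assms(1) unfolding fds_iso_def by blast
  let ?F = "\<lambda>k. restrict (h \<circ> k) (fst C)"
  have "inj_on ?F (homs C Y)"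
  proof (rule inj_onI)
    fix k1 k2 assume k: "k1 \<in> homs C Y" "k2 \<in> homs C Y" "?F k1 = ?F k2"
    show "k1 = k2"
    proof (rule extensionalityI[of _ "fst C"])
      show "k1 \<in> extensional (fst C)" "k2 \<in> extensional (fst C)" using k unfolding homs_def by (auto simp: PiE_def)
      fix x assume x: "x \<in> fst C"
      then have "h (k1 x) = h (k2 x)" using fun_cong[OF k(3), of x] by auto
      moreover have "k1 x \<in> fst Y" "k2 x \<in> fst Y" using k(1,2) x unfolding homs_def by auto
      ultimately show "k1 x = k2 x" using h(1) by (auto simp: bij_betw_def inj_on_def)
    qed
  qed
  moreover have "?F ` homs C Y \<subseteq> homs C Z"
  proof
    fix k assume "k \<in> ?F ` homs C Y"
    then obtain k0 where k0: "k0 \<in> homs C Y" "k = ?F k0" by blast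
    have "k0 x \<in> fst Y" if "x \<in> fst C" for x using k0 that unfolding homs_def by auto
    then show "k \<in> homs C Z" using k0 h assms(3) unfolding homs_def bij_betw_def is_fds_def by (auto simp: PiE_def Pi_def)
  qed
  ultimately show ?thesis using card_inj_on_le finite_homs assms unfolding is_fds_def by metis
qed

lemma homs_iso:
  assumes "fds_iso Y Z" "is_fds Y" "is_fds Z" "is_fds C"
  shows "card (homs C Y) = card (homs C Z)"
  using homs_iso_le[OF assms(1)] homs_iso_le[OF fds_iso_sym[OF assms(2,1)]] assms
  unfolding is_fds_def by (meson le_antisym)



lemma homs_prod:
  assumes C: "is_fds C"
  shows "card (homs C (fds_prod X Y)) = card (homs C X) * card (homs C Y)"
proof -
  let ?F = "\<lambda>h. (restrict (\<lambda>x. fst (prod_decode (h x))) (fst C),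
                 restrict (\<lambda>x. snd (prod_decode (h x))) (fst C))"
  let ?G = "\<lambda>(k1, k2). restrict (\<lambda>x. prod_encode (k1 x, k2 x)) (fst C)"
  have Cc: "\<And>x. x \<in> fst C \<Longrightarrow> snd C x \<in> fst C" using C unfolding is_fds_def by auto
  have "bij_betw ?F (homs C (fds_prod X Y)) (homs C X \<times> homs C Y)"
  proof (rule bij_betw_byWitness[where f'="?G"])
    show "\<forall>a\<in>homs C (fds_prod X Y). ?G (?F a) = a"
    proof
      fix h assume h: "h \<in> homs C (fds_prod X Y)"
      show "?G (?F h) = h"
      proof (rule extensionalityI[of _ "fst C"])
        show "?G (?F h) \<in> extensional (fst C)" by auto
        show "h \<in> extensional (fst C)" using h unfolding homs_def by (auto simp: PiE_def)
        fix x assume "x \<in> fst C"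
        then show "?G (?F h) x = h x" by simp
      qed
    qed
    show "\<forall>a\<in>homs C X \<times> homs C Y. ?F (?G a) = a"
    proof
      fix a assume a: "a \<in> homs C X \<times> homs C Y"
      obtain k1 k2 where k: "a = (k1, k2)" "k1 \<in> homs C X" "k2 \<in> homs C Y" using a by auto
      have e1: "k1 \<in> extensional (fst C)" "k2 \<in> extensional (fst C)"
        using k unfolding homs_def by (auto simp: PiE_def)
      have "restrict (\<lambda>x. fst (prod_decode (?G a x))) (fst C) = k1"
        by (rule extensionalityI[OF _ e1(1)]) (auto simp: k)
      moreover have "restrict (\<lambda>x. snd (prod_decode (?G a x))) (fst C) = k2"
        by (rule extensionalityI[OF _ e1(2)]) (auto simp: k)
      ultimately show "?F (?G a) = a" using k by simp
    qed
    show "?F ` homs C (fds_prod X Y) \<subseteq> homs C X \<times> homs C Y"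
    proof
      fix p assume "p \<in> ?F ` homs C (fds_prod X Y)"
      then obtain h where h: "h \<in> homs C (fds_prod X Y)" "p = ?F h" by blast
      have hx: "h x \<in> prod_encode ` (fst X \<times> fst Y)" if "x \<in> fst C" for x
        using h that unfolding homs_def fds_prod_def by auto
      have hx2: "fst (prod_decode (h x)) \<in> fst X \<and> snd (prod_decode (h x)) \<in> fst Y" if "x \<in> fst C" for x
        using hx[OF that] by auto
      have hf: "h (snd C x) = prod_encode (snd X (fst (prod_decode (h x))), snd Y (snd (prod_decode (h x))))"
        if "x \<in> fst C" for x
        using h that unfolding homs_def fds_prod_def by (auto split: prod.splits)
      show "p \<in> homs C X \<times> homs C Y"
        unfolding h(2) homs_def using hx2 hf Cc by (auto simp: PiE_def Pi_def)
    qed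
    show "?G ` (homs C X \<times> homs C Y) \<subseteq> homs C (fds_prod X Y)"
    proof
      fix h assume "h \<in> ?G ` (homs C X \<times> homs C Y)"
      then obtain k1 k2 where k: "h = ?G (k1, k2)" "k1 \<in> homs C X" "k2 \<in> homs C Y" by auto
      show "h \<in> homs C (fds_prod X Y)"
        using k Cc unfolding homs_def fds_prod_def by (auto simp: PiE_def Pi_def)
    qed
  qed
  then show ?thesis by (simp add: bij_betw_same_card card_cartesian_product)
qed

lemma homs_one: assumes that: "is_fds C" shows "card (homs C fds_one) = 1"
proof -
  have "homs C fds_one = {restrict (\<lambda>_. 0) (fst C)}"
    using that unfolding homs_def fds_one_def is_fds_def by (auto simp: PiE_def Pi_def extensional_def)
  then show ?thesis by simp
qed

lemma homs_zero: "fst C \<noteq> {} \<Longrightarrow> card (homs C fds_zero) = 0"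
  unfolding homs_def fds_zero_def by auto

lemma homs_pow: "is_fds C \<Longrightarrow> card (homs C (fds_pow X n)) = card (homs C X) ^ n"
  by (induction n) (auto simp: homs_one homs_prod)

definition fds_conn :: "fds \<Rightarrow> bool" where
  "fds_conn C \<longleftrightarrow> fst C \<noteq> {} \<and> (\<forall>S. S \<subseteq> fst C \<longrightarrow> (\<forall>x\<in>S. snd C x \<in> S) \<longrightarrow>
      (\<forall>x\<in>fst C - S. snd C x \<in> fst C - S) \<longrightarrow> S = {} \<or> S = fst C)"



lemma homs_sum:
  assumes C: "is_fds C" and conn: "fds_conn C" and X: "is_fds X" and Y: "is_fds Y"
  shows "card (homs C (fds_sum X Y)) = card (homs C X) + card (homs C Y)"
proof -
  let ?H = "homs C (fds_sum X Y)"
  let ?L = "{h\<in>?H. \<forall>x\<in>fst C. even (h x)}"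
  let ?R = "{h\<in>?H. \<forall>x\<in>fst C. odd (h x)}"
  have Cc: "\<And>x. x \<in> fst C \<Longrightarrow> snd C x \<in> fst C" using C unfolding is_fds_def by auto
  have fin: "finite ?H" using finite_homs is_fds_sum[OF X Y] C unfolding is_fds_def by blast
  have hval: "h x \<in> (\<lambda>x. 2 * x) ` fst X \<union> (\<lambda>x. 2 * x + 1) ` fst Y" if "h \<in> ?H" "x \<in> fst C" for h x
    using that unfolding homs_def fds_sum_def by auto
  have hf: "h (snd C x) = (if even (h x) then 2 * snd X (h x div 2) else 2 * snd Y (h x div 2) + 1)"
    if "h \<in> ?H" "x \<in> fst C" for h x
    using that unfolding homs_def fds_sum_def by auto
  have split: "?H = ?L \<union> ?R"
  proof
    show "?H \<subseteq> ?L \<union> ?R"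
    proof
      fix h assume h: "h \<in> ?H"
      let ?S = "{x\<in>fst C. even (h x)}"
      have "?S = {} \<or> ?S = fst C"
        using conn unfolding fds_conn_def
        apply (elim conjE allE[of _ ?S])
        using Cc hf[OF h] by auto
      then show "h \<in> ?L \<union> ?R" using h by auto
    qed
  qed auto
  have disj: "?L \<inter> ?R = {}" using conn unfolding fds_conn_def by auto
  have cL: "card ?L = card (homs C X)"
  proof -
    let ?F = "\<lambda>h. restrict (\<lambda>x. h x div 2) (fst C)"
    let ?G = "\<lambda>k. restrict (\<lambda>x. 2 * k x) (fst C)"
    have "bij_betw ?F ?L (homs C X)"
    proof (rule bij_betw_byWitness[where f'="?G"])
      show "\<forall>a\<in>?L. ?G (?F a) = a"
      proof
        fix h assume h: "h \<in> ?L"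
        show "?G (?F h) = h"
          by (rule extensionalityI[of _ "fst C"]) (use h in \<open>auto simp: homs_def PiE_def\<close>)
      qed
      show "\<forall>a\<in>homs C X. ?F (?G a) = a"
        by (auto simp: homs_def PiE_def intro!: extensionalityI[of _ "fst C"])
      show "?F ` ?L \<subseteq> homs C X"
      proof
        fix k assume "k \<in> ?F ` ?L"
        then obtain h where h: "h \<in> ?L" "k = ?F h" by blast
        have a: "h x div 2 \<in> fst X" if "x \<in> fst C" for x using hval[of h x] h that by auto
        have b: "h (snd C x) div 2 = snd X (h x div 2)" if "x \<in> fst C" for x
          using hf[of h x] h that by auto
        show "k \<in> homs C X" unfolding homs_def using h a b Cc by auto
      qed
      show "?G ` homs C X \<subseteq> ?L"
        using Cc unfolding homs_def fds_sum_def by (auto simp: PiE_def Pi_def)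
    qed
    then show ?thesis by (rule bij_betw_same_card)
  qed
  have cR: "card ?R = card (homs C Y)"
  proof -
    let ?F = "\<lambda>h. restrict (\<lambda>x. h x div 2) (fst C)"
    let ?G = "\<lambda>k. restrict (\<lambda>x. 2 * k x + 1) (fst C)"
    have "bij_betw ?F ?R (homs C Y)"
    proof (rule bij_betw_byWitness[where f'="?G"])
      show "\<forall>a\<in>?R. ?G (?F a) = a"
      proof
        fix h assume h: "h \<in> ?R"
        show "?G (?F h) = h"
          by (rule extensionalityI[of _ "fst C"]) (use h in \<open>auto simp: homs_def PiE_def\<close>)
      qed
      show "\<forall>a\<in>homs C Y. ?F (?G a) = a"
        by (auto simp: homs_def PiE_def intro!: extensionalityI[of _ "fst C"])
      show "?F ` ?R \<subseteq> homs C Y"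
      proof
        fix k assume "k \<in> ?F ` ?R"
        then obtain h where h: "h \<in> ?R" "k = ?F h" by blast
        have a: "h x div 2 \<in> fst Y" if "x \<in> fst C" for x using hval[of h x] h that by auto
        have b: "h (snd C x) div 2 = snd Y (h x div 2)" if "x \<in> fst C" for x
          using hf[of h x] h that by auto
        show "k \<in> homs C Y" unfolding homs_def using h a b Cc by auto
      qed
      show "?G ` homs C Y \<subseteq> ?R"
        using Cc unfolding homs_def fds_sum_def by (auto simp: PiE_def Pi_def)
    qed
    then show ?thesis by (rule bij_betw_same_card)
  qed
  have "card ?H = card ?L + card ?R"
    using split disj fin by (metis (no_types, lifting) card_Un_disjoint finite_Un)
  then show ?thesis using cL cR by simp
qed



fun pv :: "nat \<Rightarrow> nat list \<Rightarrow> nat \<Rightarrow> nat" where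
  "pv i [] t = 0"
| "pv i (c # cs) t = c * t ^ i + pv (Suc i) cs t"

lemma pv_mono: "t \<le> t' \<Longrightarrow> pv i cs t \<le> pv i cs t'"
  by (induction cs arbitrary: i) (auto intro!: add_mono mult_left_mono power_mono)

lemma pv_strict: "t < t' \<Longrightarrow> k < length cs \<Longrightarrow> 0 < cs ! k \<Longrightarrow> 1 \<le> i + k \<Longrightarrow> pv i cs t < pv i cs t'"
proof (induction cs arbitrary: i k)
  case Nil then show ?case by simp
next
  case (Cons c cs)
  show ?case
  proof (cases k)
    case 0
    then have "c > 0" "i \<ge> 1" using Cons.prems by auto
    then have "c * t ^ i < c * t' ^ i"
      using Cons.prems(1) by (simp add: power_strict_mono)
    moreover have "pv (Suc i) cs t \<le> pv (Suc i) cs t'" using Cons.prems(1) by (simp add: pv_mono)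
    ultimately show ?thesis by (simp add: add_less_le_mono)
  next
    case (Suc k')
    then have "pv (Suc i) cs t < pv (Suc i) cs t'"
      using Cons.prems by (intro Cons.IH) auto
    moreover have "c * t ^ i \<le> c * t' ^ i" using Cons.prems(1) by (simp add: power_mono)
    ultimately show ?thesis by (simp add: add_le_less_mono)
  qed
qed

lemma pv_inj:
  assumes "pv i cs t = pv i cs t'" "k < length cs" "0 < cs ! k" "1 \<le> i + k"
  shows "t = t'"
  using pv_strict[of t t' k cs i] pv_strict[of t' t k cs i] assms
  by (metis less_irrefl linorder_neqE_nat)

lemma homs_peval_from:
  assumes "is_fds C" "fds_conn C" "\<forall>a\<in>set as. is_fds a" "is_fds X"
  shows "card (homs C (peval_from i as X)) = pv i (map (\<lambda>a. card (homs C a)) as) (card (homs C X))"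
  using assms(3)
proof (induction as arbitrary: i)
  case Nil
  then show ?case using assms(2) by (simp add: homs_zero fds_conn_def)
next
  case (Cons a as)
  have "card (homs C (peval_from i (a # as) X)) =
        card (homs C (fds_prod a (fds_pow X i))) + card (homs C (peval_from (Suc i) as X))"
    using Cons.prems assms by (simp add: homs_sum is_fds_prod is_fds_pow is_fds_peval_from)
  also have "\<dots> = card (homs C a) * card (homs C X) ^ i + card (homs C (peval_from (Suc i) as X))"
    using assms(1) by (simp add: homs_prod homs_pow)
  finally show ?case using Cons by simp
qed

lemma homs_fix_pos:
  assumes "has_fixpoint a" "is_fds a" "is_fds C"
  shows "0 < card (homs C a)"
proof -
  obtain s where s: "s \<in> fst a" "snd a s = s" using assms(1) unfolding has_fixpoint_def by blast
  have "restrict (\<lambda>_. s) (fst C) \<in> homs C a"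
    using s assms(3) unfolding homs_def is_fds_def by auto
  then show ?thesis using finite_homs assms(2,3) unfolding is_fds_def
    by (metis card_gt_0_iff empty_iff)
qed

lemma conn_eq:
  assumes coeffs: "\<forall>a\<in>set as. is_fds a"
    and A: "is_fds A" and B: "is_fds B"
    and eq: "fds_iso (peval as A) (peval as B)"
    and k: "1 \<le> k" "k < length as" "has_fixpoint (as ! k)"
    and C: "is_fds C" "fds_conn C"
  shows "card (homs C A) = card (homs C B)"
proof -
  have "card (homs C (peval as A)) = card (homs C (peval as B))"
    using homs_iso[OF eq] coeffs A B C unfolding peval_def by (simp add: is_fds_peval_from)
  then have "pv 0 (map (\<lambda>a. card (homs C a)) as) (card (homs C A)) =
             pv 0 (map (\<lambda>a. card (homs C a)) as) (card (homs C B))"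
    unfolding peval_def using homs_peval_from C coeffs A B by simp
  moreover have "0 < map (\<lambda>a. card (homs C a)) as ! k"
    using homs_fix_pos[OF k(3) _ C(1)] coeffs k(2) by simp
  ultimately show ?thesis using pv_inj k by simp
qed



lemma homs_split:
  assumes C: "is_fds C" and S: "S \<subseteq> fst C" "\<forall>x\<in>S. snd C x \<in> S" "\<forall>x\<in>fst C - S. snd C x \<in> fst C - S"
  shows "card (homs C X) = card (homs (S, snd C) X) * card (homs (fst C - S, snd C) X)"
proof -
  let ?F = "\<lambda>h. (restrict h S, restrict h (fst C - S))"
  let ?G = "\<lambda>(k1, k2). (\<lambda>x. if x \<in> S then k1 x else k2 x)"
  have "bij_betw ?F (homs C X) (homs (S, snd C) X \<times> homs (fst C - S, snd C) X)"
  proof (rule bij_betw_byWitness[where f'="?G"])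
    show "\<forall>a\<in>homs C X. ?G (?F a) = a"
    proof
      fix h assume h: "h \<in> homs C X"
      show "?G (?F h) = h"
      proof
        fix x show "?G (?F h) x = h x" using h S(1) by (auto simp: homs_def PiE_def extensional_def)
      qed
    qed
    show "\<forall>a\<in>homs (S, snd C) X \<times> homs (fst C - S, snd C) X. ?F (?G a) = a"
    proof
      fix a assume a: "a \<in> homs (S, snd C) X \<times> homs (fst C - S, snd C) X"
      obtain k1 k2 where k: "a = (k1, k2)" "k1 \<in> homs (S, snd C) X" "k2 \<in> homs (fst C - S, snd C) X"
        using a by auto
      have e: "k1 \<in> extensional S" "k2 \<in> extensional (fst C - S)"
        using k unfolding homs_def by (auto simp: PiE_def)
      have "restrict (?G a) S = k1" by (rule extensionalityI[OF _ e(1)]) (auto simp: k)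
      moreover have "restrict (?G a) (fst C - S) = k2" by (rule extensionalityI[OF _ e(2)]) (auto simp: k)
      ultimately show "?F (?G a) = a" using k by simp
    qed
    show "?F ` homs C X \<subseteq> homs (S, snd C) X \<times> homs (fst C - S, snd C) X"
      using S unfolding homs_def by (auto simp: PiE_def Pi_def)
    show "?G ` (homs (S, snd C) X \<times> homs (fst C - S, snd C) X) \<subseteq> homs C X"
    proof
      fix h assume "h \<in> ?G ` (homs (S, snd C) X \<times> homs (fst C - S, snd C) X)"
      then obtain k1 k2 where k: "h = ?G (k1, k2)" "k1 \<in> homs (S, snd C) X" "k2 \<in> homs (fst C - S, snd C) X"
        by auto
      show "h \<in> homs C X"
        unfolding homs_def
      proof (intro CollectI conjI ballI)
        show "h \<in> fst C \<rightarrow>\<^sub>E fst X" using k S(1) unfolding homs_def by (auto simp: PiE_def Pi_def extensional_def)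
        fix x assume x: "x \<in> fst C"
        show "h (snd C x) = snd X (h x)"
        proof (cases "x \<in> S")
          case True then show ?thesis using k S(2) unfolding homs_def by auto
        next
          case False then show ?thesis using k S(3) x unfolding homs_def by auto
        qed
      qed
    qed
  qed
  then show ?thesis by (simp add: bij_betw_same_card card_cartesian_product)
qed

lemma homs_empty: "fst C = {} \<Longrightarrow> card (homs C X) = 1"
  unfolding homs_def by simp

lemma all_eq:
  assumes hconn: "\<And>C. is_fds C \<Longrightarrow> fds_conn C \<Longrightarrow> card (homs C A) = card (homs C B)"
  shows "is_fds C \<Longrightarrow> card (homs C A) = card (homs C B)"
proof (induction "card (fst C)" arbitrary: C rule: less_induct)
  case less
  show ?case
  proof (cases "fst C = {}")
    case True then show ?thesis by (simp add: homs_empty)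
  next
    case ne: False
    show ?thesis
    proof (cases "fds_conn C")
      case True then show ?thesis using hconn less.prems by blast
    next
      case False
      then obtain S where S: "S \<subseteq> fst C" "\<forall>x\<in>S. snd C x \<in> S" "\<forall>x\<in>fst C - S. snd C x \<in> fst C - S"
        "S \<noteq> {}" "S \<noteq> fst C"
        using ne unfolding fds_conn_def by blast
      have fin: "finite (fst C)" using less.prems unfolding is_fds_def by auto
      have f1: "is_fds (S, snd C)" using S fin unfolding is_fds_def by (auto intro: finite_subset)
      have f2: "is_fds (fst C - S, snd C)" using S fin unfolding is_fds_def by auto
      have c1: "card S < card (fst C)" using S fin by (simp add: psubset_card_mono psubset_eq)
      have c2: "card (fst C - S) < card (fst C)" using S fin
        by (metis Diff_subset card_seteq diff_card_le_card_Diff diff_diff_cancel diff_le_self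
            dual_order.strict_iff_order subset_Diff_insert subset_antisym card_mono
            Diff_eq_empty_iff card_Diff_subset finite_subset card_0_eq)
      show ?thesis
        using homs_split[OF less.prems S(1-3)] less.hyps[OF _ f1] less.hyps[OF _ f2] c1 c2 by simp
    qed
  qed
qed



definition kerr :: "fds \<Rightarrow> (nat \<Rightarrow> nat) \<Rightarrow> (nat \<times> nat) set" where
  "kerr C h = {(x, y). x \<in> fst C \<and> y \<in> fst C \<and> h x = h y}"

definition congr :: "fds \<Rightarrow> (nat \<times> nat) set \<Rightarrow> bool" where
  "congr C R \<longleftrightarrow> R \<subseteq> fst C \<times> fst C \<and> (\<forall>x\<in>fst C. (x, x) \<in> R) \<and> (\<forall>x y. (x, y) \<in> R \<longrightarrow> (y, x) \<in> R)
     \<and> (\<forall>x y z. (x, y) \<in> R \<longrightarrow> (y, z) \<in> R \<longrightarrow> (x, z) \<in> R)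
     \<and> (\<forall>x y. (x, y) \<in> R \<longrightarrow> (snd C x, snd C y) \<in> R)"

definition cclos :: "fds \<Rightarrow> (nat \<times> nat) set \<Rightarrow> (nat \<times> nat) set" where
  "cclos C T = \<Inter>{R. congr C R \<and> T \<subseteq> R}"

definition rep :: "(nat \<times> nat) set \<Rightarrow> nat \<Rightarrow> nat" where
  "rep R x = (LEAST y. (x, y) \<in> R)"

definition quot :: "fds \<Rightarrow> (nat \<times> nat) set \<Rightarrow> fds" where
  "quot C R = (rep R ` fst C, \<lambda>x. rep R (snd C x))"

lemma kerr_congr:
  assumes C: "is_fds C" and h: "h \<in> homs C X" shows "congr C (kerr C h)"
proof -
  have Cc: "\<And>x. x \<in> fst C \<Longrightarrow> snd C x \<in> fst C" using C unfolding is_fds_def by auto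
  have hh: "\<And>x. x \<in> fst C \<Longrightarrow> h (snd C x) = snd X (h x)" using h unfolding homs_def by blast
  show ?thesis unfolding congr_def kerr_def using Cc hh by auto
qed

lemma kerr_sub: "kerr C h \<subseteq> fst C \<times> fst C" unfolding kerr_def by auto

lemma congrD:
  assumes "congr C R"
  shows "R \<subseteq> fst C \<times> fst C" "\<And>x. x \<in> fst C \<Longrightarrow> (x, x) \<in> R" "\<And>x y. (x, y) \<in> R \<Longrightarrow> (y, x) \<in> R"
    "\<And>x y z. (x, y) \<in> R \<Longrightarrow> (y, z) \<in> R \<Longrightarrow> (x, z) \<in> R"
    "\<And>x y. (x, y) \<in> R \<Longrightarrow> (snd C x, snd C y) \<in> R"
  using assms unfolding congr_def by blast+

lemma cclos_props:
  assumes C: "is_fds C" and T: "T \<subseteq> fst C \<times> fst C"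
  shows "congr C (cclos C T)" "T \<subseteq> cclos C T" "\<And>R. congr C R \<Longrightarrow> T \<subseteq> R \<Longrightarrow> cclos C T \<subseteq> R"
proof -
  have full: "congr C (fst C \<times> fst C)" using C unfolding congr_def is_fds_def by auto
  let ?F = "{R. congr C R \<and> T \<subseteq> R}"
  have mem: "p \<in> cclos C T \<longleftrightarrow> (\<forall>R. congr C R \<longrightarrow> T \<subseteq> R \<longrightarrow> p \<in> R)" for p
    unfolding cclos_def by blast
  have s1: "cclos C T \<subseteq> fst C \<times> fst C" unfolding cclos_def using full T by blast
  have s2: "(x, x) \<in> cclos C T" if "x \<in> fst C" for x
    unfolding mem using congrD(2) that by blast
  have s3: "(y, x) \<in> cclos C T" if "(x, y) \<in> cclos C T" for x y
    unfolding mem proof (intro allI impI)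
    fix R assume R: "congr C R" "T \<subseteq> R"
    then have "(x, y) \<in> R" using that mem by blast
    then show "(y, x) \<in> R" using congrD(3)[OF R(1)] by blast
  qed
  have s4: "(x, z) \<in> cclos C T" if "(x, y) \<in> cclos C T" "(y, z) \<in> cclos C T" for x y z
    unfolding mem proof (intro allI impI)
    fix R assume R: "congr C R" "T \<subseteq> R"
    then have "(x, y) \<in> R" "(y, z) \<in> R" using that mem by blast+
    then show "(x, z) \<in> R" using congrD(4)[OF R(1)] by blast
  qed
  have s5: "(snd C x, snd C y) \<in> cclos C T" if "(x, y) \<in> cclos C T" for x y
    unfolding mem proof (intro allI impI)
    fix R assume R: "congr C R" "T \<subseteq> R"
    then have "(x, y) \<in> R" using that mem by blast
    then show "(snd C x, snd C y) \<in> R" using congrD(5)[OF R(1)] by blast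
  qed
  show "congr C (cclos C T)" unfolding congr_def using s1 s2 s3 s4 s5 by (intro conjI allI impI ballI)
  show "T \<subseteq> cclos C T" unfolding cclos_def by blast
  show "\<And>R. congr C R \<Longrightarrow> T \<subseteq> R \<Longrightarrow> cclos C T \<subseteq> R" unfolding cclos_def by blast
qed

lemma rep_props:
  assumes E: "congr C E" and x: "x \<in> fst C"
  shows "(x, rep E x) \<in> E" "rep E x \<in> fst C" "\<And>y. (x, y) \<in> E \<Longrightarrow> rep E x = rep E y"
    "rep E (rep E x) = rep E x"
proof -
  have "(x, x) \<in> E" using congrD(2)[OF E x] .
  then show a: "(x, rep E x) \<in> E" unfolding rep_def by (rule LeastI)
  then show "rep E x \<in> fst C" using congrD(1)[OF E] by blast
  have eqv: "rep E x = rep E y" if "(x, y) \<in> E" for y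
  proof -
    have "(\<lambda>z. (x, z) \<in> E) = (\<lambda>z. (y, z) \<in> E)"
    proof
      fix z
      have "(y, x) \<in> E" using that congrD(3)[OF E] by blast
      then show "((x, z) \<in> E) = ((y, z) \<in> E)" using that congrD(4)[OF E] by blast
    qed
    then show ?thesis unfolding rep_def by simp
  qed
  then show "\<And>y. (x, y) \<in> E \<Longrightarrow> rep E x = rep E y" .
  show "rep E (rep E x) = rep E x" using eqv[OF a] by simp
qed

lemma quot_fds: "is_fds C \<Longrightarrow> congr C E \<Longrightarrow> is_fds (quot C E)"
  unfolding quot_def is_fds_def using rep_props(2) by auto

lemma quot_card:
  assumes C: "is_fds C" and E: "congr C E"
  shows "card (homs (quot C E) X) = card {h \<in> homs C X. E \<subseteq> kerr C h}"
proof -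
  have Cc: "\<And>x. x \<in> fst C \<Longrightarrow> snd C x \<in> fst C" using C unfolding is_fds_def by auto
  note rp = rep_props[OF E]
  have Esub: "E \<subseteq> fst C \<times> fst C" using congrD(1)[OF E] .
  have repf: "rep E (snd C (rep E x)) = rep E (snd C x)" if "x \<in> fst C" for x
  proof -
    have "(snd C x, snd C (rep E x)) \<in> E" using congrD(5)[OF E rp(1)[OF that]] .
    then show ?thesis using rp(3)[OF Cc[OF that]] by simp
  qed
  let ?R = "rep E ` fst C"
  let ?F = "\<lambda>k. restrict (\<lambda>x. k (rep E x)) (fst C)"
  let ?G = "\<lambda>h. restrict h ?R"
  have "bij_betw ?F (homs (quot C E) X) {h \<in> homs C X. E \<subseteq> kerr C h}"
  proof (rule bij_betw_byWitness[where f'="?G"])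
    show "\<forall>k\<in>homs (quot C E) X. ?G (?F k) = k"
    proof
      fix k assume k: "k \<in> homs (quot C E) X"
      show "?G (?F k) = k"
        by (rule extensionalityI[of _ ?R]) (use k rp in \<open>auto simp: homs_def quot_def PiE_def\<close>)
    qed
    show "\<forall>h\<in>{h \<in> homs C X. E \<subseteq> kerr C h}. ?F (?G h) = h"
    proof
      fix h assume h: "h \<in> {h \<in> homs C X. E \<subseteq> kerr C h}"
      have "h (rep E x) = h x" if "x \<in> fst C" for x
        using h rp(1)[OF that] unfolding kerr_def by auto
      then show "?F (?G h) = h"
        by (intro extensionalityI[of _ "fst C"]) (use h rp in \<open>auto simp: homs_def PiE_def\<close>)
    qed
    show "?F ` homs (quot C E) X \<subseteq> {h \<in> homs C X. E \<subseteq> kerr C h}"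
    proof
      fix h assume "h \<in> ?F ` homs (quot C E) X"
      then obtain k where k: "k \<in> homs (quot C E) X" "h = ?F k" by blast
      have kv: "k (rep E x) \<in> fst X" if "x \<in> fst C" for x
        using k that unfolding homs_def quot_def by auto
      have kh: "k (rep E (snd C (rep E x))) = snd X (k (rep E x))" if "x \<in> fst C" for x
        using k that unfolding homs_def quot_def by auto
      have "h \<in> homs C X"
        unfolding homs_def using k(2) kv kh repf Cc by (auto simp: PiE_def Pi_def)
      moreover have "E \<subseteq> kerr C h"
      proof
        fix p assume p: "p \<in> E"
        then obtain x y where xy: "p = (x, y)" "x \<in> fst C" "y \<in> fst C" using Esub by auto
        then have "rep E x = rep E y" using rp(3) p by auto
        then show "p \<in> kerr C h" using xy k(2) unfolding kerr_def by auto
      qed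
      ultimately show "h \<in> {h \<in> homs C X. E \<subseteq> kerr C h}" by blast
    qed
    show "?G ` {h \<in> homs C X. E \<subseteq> kerr C h} \<subseteq> homs (quot C E) X"
    proof
      fix k assume "k \<in> ?G ` {h \<in> homs C X. E \<subseteq> kerr C h}"
      then obtain h where h: "h \<in> homs C X" "E \<subseteq> kerr C h" "k = ?G h" by blast
      have hr: "h (rep E x) = h x" if "x \<in> fst C" for x
        using h rp(1)[OF that] unfolding kerr_def by auto
      have kv: "k \<in> rep E ` fst C \<rightarrow>\<^sub>E fst X"
        using h rp(2) unfolding homs_def by (auto simp: PiE_def Pi_def)
      have kh: "k (rep E (snd C r)) = snd X (k r)" if r: "r \<in> rep E ` fst C" for r
      proof -
        obtain x where x: "x \<in> fst C" "r = rep E x" using r by auto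
        have r': "r \<in> fst C" using x rp(2) by simp
        have rr: "rep E (snd C r) \<in> rep E ` fst C" using Cc[OF r'] by blast
        have "k (rep E (snd C r)) = h (rep E (snd C r))" using h(3) rr by simp
        also have "\<dots> = h (snd C r)" using hr Cc r' by blast
        also have "\<dots> = snd X (h r)" using h(1) r' unfolding homs_def by blast
        also have "\<dots> = snd X (k r)" using h(3) r by simp
        finally show ?thesis .
      qed
      show "k \<in> homs (quot C E) X"
        unfolding homs_def quot_def using kv kh by simp
    qed
  qed
  then show ?thesis by (rule bij_betw_same_card)
qed

lemma card_fibers:
  assumes "finite H" "finite U" "\<forall>h\<in>H. \<kappa> h \<subseteq> U"
  shows "card {h\<in>H. T \<subseteq> \<kappa> h} = (\<Sum>T'\<in>{T'. T \<subseteq> T' \<and> T' \<subseteq> U}. card {h\<in>H. \<kappa> h = T'})"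
proof -
  have e: "{h\<in>H. T \<subseteq> \<kappa> h} = (\<Union>T'\<in>{T'. T \<subseteq> T' \<and> T' \<subseteq> U}. {h\<in>H. \<kappa> h = T'})"
    using assms(3) by auto
  have fi: "finite {T'. T \<subseteq> T' \<and> T' \<subseteq> U}"
    using assms(2) by (rule finite_subset[rotated, OF iffD2[OF finite_Pow_iff]]) auto
  show ?thesis unfolding e
    by (rule card_UN_disjoint[OF fi]) (use assms(1) in auto)
qed

lemma mobius:
  fixes NA NB MA MB :: "'a set \<Rightarrow> nat"
  assumes U: "finite U"
    and Meq: "\<And>T. T \<subseteq> U \<Longrightarrow> MA T = MB T"
    and sA: "\<And>T. T \<subseteq> U \<Longrightarrow> MA T = (\<Sum>T'\<in>{T'. T \<subseteq> T' \<and> T' \<subseteq> U}. NA T')"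
    and sB: "\<And>T. T \<subseteq> U \<Longrightarrow> MB T = (\<Sum>T'\<in>{T'. T \<subseteq> T' \<and> T' \<subseteq> U}. NB T')"
  shows "T \<subseteq> U \<Longrightarrow> NA T = NB T"
proof (induction "card (U - T)" arbitrary: T rule: less_induct)
  case less
  let ?S = "{T'. T \<subseteq> T' \<and> T' \<subseteq> U}"
  have fi: "finite ?S"
    using U by (rule finite_subset[rotated, OF iffD2[OF finite_Pow_iff]]) auto
  have TS: "T \<in> ?S" using less.prems by auto
  have rest: "(\<Sum>T'\<in>?S - {T}. NA T') = (\<Sum>T'\<in>?S - {T}. NB T')"
  proof (rule sum.cong[OF refl])
    fix T' assume T': "T' \<in> ?S - {T}"
    then have "U - T' \<subset> U - T" using less.prems by auto
    then have "card (U - T') < card (U - T)" using U by (simp add: psubset_card_mono)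
    then show "NA T' = NB T'" using less.hyps T' by auto
  qed
  have "MA T = NA T + (\<Sum>T'\<in>?S - {T}. NA T')" using sA[OF less.prems] sum.remove[OF fi TS] by simp
  moreover have "MB T = NB T + (\<Sum>T'\<in>?S - {T}. NB T')" using sB[OF less.prems] sum.remove[OF fi TS] by simp
  ultimately show ?case using Meq[OF less.prems] rest by simp
qed

lemma kerr_inj: "kerr C h = Id_on (fst C) \<longleftrightarrow> inj_on h (fst C)"
  unfolding kerr_def Id_on_def inj_on_def by auto

lemma inj_count_eq:
  assumes A: "is_fds A" and B: "is_fds B"
    and heq: "\<And>C. is_fds C \<Longrightarrow> card (homs C A) = card (homs C B)"
    and C: "is_fds C"
  shows "card {h\<in>homs C A. kerr C h = Id_on (fst C)} = card {h\<in>homs C B. kerr C h = Id_on (fst C)}"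
proof -
  let ?U = "fst C \<times> fst C"
  have fU: "finite ?U" using C unfolding is_fds_def by auto
  have M: "card {h\<in>homs C X. T \<subseteq> kerr C h} = card (homs (quot C (cclos C T)) X)" if T: "T \<subseteq> ?U" for T X
  proof -
    have "{h\<in>homs C X. T \<subseteq> kerr C h} = {h\<in>homs C X. cclos C T \<subseteq> kerr C h}"
      using cclos_props[OF C T] kerr_congr[OF C] by blast
    then show ?thesis using quot_card[OF C cclos_props(1)[OF C T]] by simp
  qed
  have fh: "finite (homs C X)" if "is_fds X" for X
    using finite_homs that C unfolding is_fds_def by blast
  show ?thesis
  proof (rule mobius[where U="?U" and MA="\<lambda>T. card {h\<in>homs C A. T \<subseteq> kerr C h}"
        and MB="\<lambda>T. card {h\<in>homs C B. T \<subseteq> kerr C h}"])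
    show "finite ?U" by (rule fU)
    show "card {h\<in>homs C A. T \<subseteq> kerr C h} = card {h\<in>homs C B. T \<subseteq> kerr C h}" if "T \<subseteq> ?U" for T
      using M[OF that] heq[OF quot_fds[OF C cclos_props(1)[OF C that]]] by simp
    show "card {h\<in>homs C A. T \<subseteq> kerr C h} =
      (\<Sum>T'\<in>{T'. T \<subseteq> T' \<and> T' \<subseteq> ?U}. card {h\<in>homs C A. kerr C h = T'})" for T
      by (rule card_fibers[OF fh[OF A] fU]) (simp add: kerr_sub)
    show "card {h\<in>homs C B. T \<subseteq> kerr C h} =
      (\<Sum>T'\<in>{T'. T \<subseteq> T' \<and> T' \<subseteq> ?U}. card {h\<in>homs C B. kerr C h = T'})" for T
      by (rule card_fibers[OF fh[OF B] fU]) (simp add: kerr_sub)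
    show "Id_on (fst C) \<subseteq> ?U" by auto
  qed
qed

lemma exists_inj:
  assumes A: "is_fds A" and B: "is_fds B"
    and heq: "\<And>C. is_fds C \<Longrightarrow> card (homs C A) = card (homs C B)"
  shows "\<exists>h\<in>homs A B. inj_on h (fst A)"
proof -
  have idh: "restrict id (fst A) \<in> homs A A" using A unfolding homs_def is_fds_def by auto
  have "kerr A (restrict id (fst A)) = Id_on (fst A)" unfolding kerr_inj by (simp add: inj_on_def)
  then have ne: "{h\<in>homs A A. kerr A h = Id_on (fst A)} \<noteq> {}" using idh by blast
  have fin: "finite {h\<in>homs A B. kerr A h = Id_on (fst A)}"
    using finite_homs A B unfolding is_fds_def by auto
  have fin2: "finite {h\<in>homs A A. kerr A h = Id_on (fst A)}"
    using finite_homs A unfolding is_fds_def by auto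
  have "card {h\<in>homs A B. kerr A h = Id_on (fst A)} \<noteq> 0"
  proof -
    have "card {h\<in>homs A A. kerr A h = Id_on (fst A)} > 0" using ne fin2 card_gt_0_iff by blast
    then show ?thesis using inj_count_eq[OF A B heq A] by simp
  qed
  then have "{h\<in>homs A B. kerr A h = Id_on (fst A)} \<noteq> {}" by (metis card.empty)
  then show ?thesis using kerr_inj by blast
qed

lemma lovasz:
  assumes A: "is_fds A" and B: "is_fds B"
    and heq: "\<And>C. is_fds C \<Longrightarrow> card (homs C A) = card (homs C B)"
  shows "fds_iso A B"
proof -
  obtain h where h: "h \<in> homs A B" "inj_on h (fst A)" using exists_inj[OF A B heq] by blast
  obtain g where g: "g \<in> homs B A" "inj_on g (fst B)" using exists_inj[OF B A] heq by metis
  have fA: "finite (fst A)" and fB: "finite (fst B)" using A B unfolding is_fds_def by auto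
  have hi: "h ` fst A \<subseteq> fst B" using h unfolding homs_def by auto
  have gi: "g ` fst B \<subseteq> fst A" using g unfolding homs_def by auto
  have "card (fst A) \<le> card (fst B)" using card_inj_on_le[OF h(2) hi fB] .
  moreover have "card (fst B) \<le> card (fst A)" using card_inj_on_le[OF g(2) gi fA] .
  ultimately have "card (h ` fst A) = card (fst B)" using card_image[OF h(2)] by simp
  then have "h ` fst A = fst B" using card_subset_eq[OF fB hi] by simp
  then have "bij_betw h (fst A) (fst B)" using h(2) unfolding bij_betw_def by simp
  moreover have "\<forall>x\<in>fst A. h (snd A x) = snd B (h x)" using h unfolding homs_def by auto
  ultimately show ?thesis unfolding fds_iso_def by blast
qed

theorem mainTheorem6:
  fixes as :: "fds list" and A B :: fds
  assumes coeffs: "\<forall>a\<in>set as. is_fds a"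
    and A: "is_fds A" and B: "is_fds B"
    and eq: "fds_iso (peval as A) (peval as B)"
    and cond: "(1 < length as \<and> has_fixpoint (as ! 1))
               \<or> (\<exists>i. 1 < i \<and> i < length as \<and> has_fixpoint (as ! i) \<and> has_fixpoint A)"
  shows "fds_iso A B"
proof -
  obtain k where k: "1 \<le> k" "k < length as" "has_fixpoint (as ! k)"
    using cond by (metis less_imp_le order_refl)
  have "\<And>C. is_fds C \<Longrightarrow> fds_conn C \<Longrightarrow> card (homs C A) = card (homs C B)"
    using conn_eq[OF coeffs A B eq k] by blast
  then have "\<And>C. is_fds C \<Longrightarrow> card (homs C A) = card (homs C B)"
    using all_eq by blast
  then show ?thesis using lovasz[OF A B] by blast
qed


end
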